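(* Assume $\delta=\lambda-\mu>0$ and fix $T>0$. For $b\ge b_0$ let $(R^{\pi^*_b,b}_t,L^{\pi^*_b}_t)$ be the reflected process at barrier $b$ started at $b$, and let $\tau^{\pi^*_b}_b=\inf\{t:R^{\pi^*_b,b}_t=0\}$. Then $$\lim_{b\to\infty}\mathbf P[\tau^{\pi^*_b}_b\le T]=0.$$
   Context: Setup. Let $(\Omega,\mathcal F,\{\mathcal F_t\}_{t\ge0},\mathbf P)$ be a filtered probability space satisfying the usual conditions and carrying a standard Brownian motion $W$. Fix constants $\sigma>0$, $c>0$, $0<\mu<\lambda$, and set $\delta:=\lambda-\mu>0$. HJB solutions. For $b>0$ consider the problem: find $g\in C^1([0,\infty))\cap C^2([0,\infty)\setminus\{b\})$ with $$\max_{a\in[0,1]}\big[\tfrac12\sigma^2a^2g''(x)+(\mu-(1-a)\lambda)g'(x)-cg(x)\big]=0 \text{ on } [0,b],\qquad g'(x)=1 \text{ for } x\ge b,\qquad g(0)=0.$$ - $b_0>0$ denotes the barrier for which this problem has a solution $f\in C^2([0,\infty))$ (so additionally $f''=0$ on $[b_0,\infty)$). - For $b\ge b_0$, $g_b$ denotes the solution of this problem constructed in the paper, with $g_{b_0}=f$. Feedback control. $A^*_b(x)\in[0,1]$ is the maximizer of the bracket for $g=g_b$. - If $\lambda\ge2\mu$, then $A^*_b\equiv1$; in this case put $m=0$. - If $\mu<\lambda<2\mu$, there is a level $m>0$, independent of $b\ge b_0$, such that $A^*_b(x)=-\lambda g_b'(x)/(\sigma^2g_b''(x))\in(0,1)$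 for $0\le x<m$ and $A^*_b(x)=1$ for $x\ge m$. Reflected optimal process. For $b\ge b_0$ and $x\in[0,b]$, $(R^{\pi^*_b,x}_t,L^{\pi^*_b}_t)$ is the unique solution of the SDE with reflection $$dR_t=(\mu-(1-A^*_b(R_t))\lambda)\,dt+\sigma A^*_b(R_t)\,dW_t-dL_t,\qquad R_0=x,\qquad 0\le R_t\le b,\qquad \int_0^\infty 1_{\{R_t<b\}}\,dL_t=0,$$ with $L$ nondecreasing, considered until it hits $0$. *)

theory Defs
  imports "HOL-Probability.Probability"
begin

definition usual_conditions :: "'a measure \<Rightarrow> (real \<Rightarrow> 'a measure) \<Rightarrow> bool" where
  "usual_conditions M F \<longleftrightarrow>
     filtration (space M) F \<and>
     (\<forall>t. sets (F t) \<subseteq> sets M) \<and>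
     (\<forall>A B. B \<in> null_sets M \<longrightarrow> A \<subseteq> B \<longrightarrow> A \<in> sets M) \<and>
     (\<forall>N \<in> null_sets M. N \<in> sets (F 0)) \<and>
     (\<forall>t. sets (F t) = (\<Inter>u\<in>{t<..}. sets (F u)))"

definition adapted :: "(real \<Rightarrow> 'a measure) \<Rightarrow> (real \<Rightarrow> 'a \<Rightarrow> real) \<Rightarrow> bool" where
  "adapted F X \<longleftrightarrow> (\<forall>t\<ge>0. X t \<in> borel_measurable (F t))"

definition brownian_motion :: "'a measure \<Rightarrow> (real \<Rightarrow> 'a measure) \<Rightarrow> (real \<Rightarrow> 'a \<Rightarrow> real) \<Rightarrow> bool" where
  "brownian_motion M F W \<longleftrightarrow>
     adapted F W \<and>
     (\<forall>\<omega>\<in>space M. W 0 \<omega> = 0 \<and> continuous_on {0..} (\<lambda>t. W t \<omega>)) \<and>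
     (\<forall>s t. 0 \<le> s \<longrightarrow> s < t \<longrightarrow>
        distributed M lborel (\<lambda>\<omega>. W t \<omega> - W s \<omega>) (normal_density 0 (sqrt (t - s))) \<and>
        (\<forall>A \<in> sets (F s). \<forall>B \<in> sets borel.
           measure M (A \<inter> {\<omega> \<in> space M. W t \<omega> - W s \<omega> \<in> B})
             = measure M A * measure M {\<omega> \<in> space M. W t \<omega> - W s \<omega> \<in> B}))"

definition dyadic_ito_sum :: "(real \<Rightarrow> 'a \<Rightarrow> real) \<Rightarrow> (real \<Rightarrow> 'a \<Rightarrow> real) \<Rightarrow> real \<Rightarrow> nat \<Rightarrow> 'a \<Rightarrow> real" where
  "dyadic_ito_sum W H t n \<omega> =
     (\<Sum>k<2^n. H (t * real k / 2^n) \<omega> * (W (t * real (Suc k) / 2^n) \<omega> - W (t * real k / 2^n) \<omega>))"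

text \<open>I is (a version of) the Ito integral of the adapted left-continuous integrand H over [0,t]
  w.r.t. W: the limit in probability of the left-point dyadic Riemann sums.\<close>
definition is_ito_integral :: "'a measure \<Rightarrow> (real \<Rightarrow> 'a \<Rightarrow> real) \<Rightarrow> (real \<Rightarrow> 'a \<Rightarrow> real) \<Rightarrow> real \<Rightarrow> ('a \<Rightarrow> real) \<Rightarrow> bool" where
  "is_ito_integral M W H t I \<longleftrightarrow>
     I \<in> borel_measurable M \<and>
     (\<forall>\<epsilon>>0. (\<lambda>n. measure M {\<omega> \<in> space M. \<bar>dyadic_ito_sum W H t n \<omega> - I \<omega>\<bar> > \<epsilon>}) \<longlonglongrightarrow> 0)"

text \<open>First hitting time of 0 (value \<infinity> if 0 is never hit).\<close>
definition hit0 :: "(real \<Rightarrow> 'a \<Rightarrow> real) \<Rightarrow> 'a \<Rightarrow> ereal" where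
  "hit0 R \<omega> = Inf {ereal t | t. 0 \<le> t \<and> R t \<omega> = 0}"

text \<open>The bracket of the HJB equation, with g' and g'' given at the point x.\<close>
definition hjb_bracket :: "real \<Rightarrow> real \<Rightarrow> real \<Rightarrow> real \<Rightarrow> real \<Rightarrow> real \<Rightarrow> real \<Rightarrow> real \<Rightarrow> real" where
  "hjb_bracket sig mu lam c a g0 g1 g2 =
     1/2 * sig^2 * a^2 * g2 + (mu - (1 - a) * lam) * g1 - c * g0"

definition hjb_solution :: "real \<Rightarrow> real \<Rightarrow> real \<Rightarrow> real \<Rightarrow> real \<Rightarrow>
    (real \<Rightarrow> real) \<Rightarrow> (real \<Rightarrow> real) \<Rightarrow> (real \<Rightarrow> real) \<Rightarrow> bool" where
  "hjb_solution sig mu lam c b g g' g'' \<longleftrightarrow>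
     (\<forall>x\<ge>0. (g has_real_derivative g' x) (at x within {0..})) \<and>
     continuous_on {0..} g' \<and>
     (\<forall>x\<ge>0. x \<noteq> b \<longrightarrow> (g' has_real_derivative g'' x) (at x within {0..})) \<and>
     continuous_on ({0..} - {b}) g'' \<and>
     (\<forall>x\<in>{0..<b}.
        (\<forall>a\<in>{0..1}. hjb_bracket sig mu lam c a (g x) (g' x) (g'' x) \<le> 0) \<and>
        (\<exists>a\<in>{0..1}. hjb_bracket sig mu lam c a (g x) (g' x) (g'' x) = 0)) \<and>
     (\<forall>x\<ge>b. g' x = 1) \<and>
     g 0 = 0"

definition reflected_solution :: "'a measure \<Rightarrow> (real \<Rightarrow> 'a measure) \<Rightarrow> (real \<Rightarrow> 'a \<Rightarrow> real) \<Rightarrow>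
    real \<Rightarrow> real \<Rightarrow> real \<Rightarrow> (real \<Rightarrow> real) \<Rightarrow> real \<Rightarrow> real \<Rightarrow>
    (real \<Rightarrow> 'a \<Rightarrow> real) \<Rightarrow> (real \<Rightarrow> 'a \<Rightarrow> real) \<Rightarrow> bool" where
  "reflected_solution M F W sig mu lam A b x R L \<longleftrightarrow>
     adapted F R \<and> adapted F L \<and>
     (\<forall>\<omega>\<in>space M.
        R 0 \<omega> = x \<and>
        continuous_on {0..} (\<lambda>t. R t \<omega>) \<and>
        continuous_on UNIV (\<lambda>t. L t \<omega>) \<and>
        mono (\<lambda>t. L t \<omega>) \<and>
        (\<forall>t\<le>0. L t \<omega> = 0) \<and>
        (\<forall>t\<ge>0. 0 \<le> R t \<omega> \<and> R t \<omega> \<le> b) \<and>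
        (\<forall>s t. hit0 R \<omega> \<le> ereal s \<longrightarrow> s \<le> t \<longrightarrow> R t \<omega> = R s \<omega> \<and> L t \<omega> = L s \<omega>) \<and>
        (\<integral>\<^sup>+ t. indicator {t. 0 \<le> t \<and> R t \<omega> < b} t \<partial>interval_measure (\<lambda>t. L t \<omega>)) = 0) \<and>
     (\<forall>t\<ge>0. \<exists>I. is_ito_integral M W
                    (\<lambda>s \<omega>. if ereal s \<le> hit0 R \<omega> then sig * A (R s \<omega>) else 0) t I \<and>
        (AE \<omega> in M. R t \<omega> = x
            + integral {0..t} (\<lambda>s. if ereal s \<le> hit0 R \<omega> then mu - (1 - A (R s \<omega>)) * lam else 0)
            + I \<omega> - L t \<omega>))"

end

theory Submission
  imports Defs
begin


lemma rat_dense_closed: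
  fixes f :: "real \<Rightarrow> real"
  assumes cont: "continuous_on {0..c} f" and S: "closed S"
    and Q: "\<And>q. q \<in> \<rat> \<Longrightarrow> 0 \<le> q \<Longrightarrow> q \<le> c \<Longrightarrow> f q \<in> S"
    and t: "0 \<le> t" "t \<le> c"
  shows "f t \<in> S"
proof -
  have C: "closed ({0..c} \<inter> f -` S)"
    by (rule continuous_closed_preimage[OF cont]) (auto simp: S)
  have sub: "\<rat> \<inter> {0..c} \<subseteq> {0..c} \<inter> f -` S" using Q by auto
  have "t \<in> closure (\<rat> \<inter> {0..c})"
    unfolding closure_approachable
  proof (intro allI impI)
    fix e :: real assume e: "e > 0"
    show "\<exists>y\<in>\<rat> \<inter> {0..c}. dist y t < e"
    proof (cases "t = 0")
      case True thus ?thesis using e t by (intro bexI[of _ 0]) auto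
    next
      case False
      then have "max 0 (t - e) < t" using t e by auto
      from Rats_dense_in_real[OF this] obtain r where "r \<in> \<rat>" "max 0 (t - e) < r" "r < t" by blast
      thus ?thesis using t by (intro bexI[of _ r]) (auto simp: dist_real_def)
    qed
  qed
  also have "\<dots> \<subseteq> {0..c} \<inter> f -` S" by (rule closure_minimal[OF sub C])
  finally show ?thesis by auto
qed


lemma adapted_meas:
  assumes "usual_conditions M F" "adapted F X" "t \<ge> 0"
  shows "X t \<in> borel_measurable M"
proof -
  have f: "filtration (space M) F"
    using assms(1) unfolding usual_conditions_def by (rule conjunct1)
  have s0: "\<forall>t. sets (F t) \<subseteq> sets M"
    using assms(1) unfolding usual_conditions_def by (elim conjE) assumption
  have s: "sets (F t) \<subseteq> sets M" using s0 by blast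
  have sp: "space (F t) = space M" by (rule filtration.space_F[OF f])
  have "subalgebra M (F t)" unfolding subalgebra_def
    using s sp by simp
  moreover have "X t \<in> borel_measurable (F t)" using assms(2,3) unfolding adapted_def by simp
  ultimately show ?thesis by (rule measurable_from_subalg)
qed


lemma path_lemma:
  fixes R W L :: "real \<Rightarrow> real"
  assumes contR: "continuous_on {0..} R" and contW: "continuous_on {0..} W"
    and contL: "continuous_on UNIV L" and monoL: "mono L"
    and R0: "R 0 = b" and bnd: "\<forall>t\<ge>0. 0 \<le> R t \<and> R t \<le> b"
    and supp: "(\<integral>\<^sup>+ t. indicator {t. 0 \<le> t \<and> R t < b} t \<partial>interval_measure L) = 0"
    and P: "\<forall>q\<in>\<rat>. 0 \<le> q \<longrightarrow> (\<forall>u\<in>{0..q}. m \<le> R u) \<longrightarrow> R q = b + mu * q + vol * W q - L q"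
    and vol: "vol > 0" and mu: "mu \<ge> 0" and m: "0 < m" "m < b" and t0: "t0 \<ge> 0" "R t0 = 0"
  shows "\<exists>t\<in>{0..t0}. (b-m)/(2 * vol) \<le> \<bar>W t\<bar>"
proof -
  have cR: "continuous_on {x..y} R" if "0 \<le> x" for x y
    by (rule continuous_on_subset[OF contR]) (use that in auto)
  define Zm where "Zm = {0..t0} \<inter> R -` {m}"
  have "\<exists>x. 0 \<le> x \<and> x \<le> t0 \<and> R x = m"
    by (rule IVT2') (use t0 m R0 cR in auto)
  then have Zne: "Zm \<noteq> {}" unfolding Zm_def by auto
  have Zcl: "closed Zm" unfolding Zm_def
    by (rule continuous_closed_preimage[OF cR]) auto
  have Zbd: "bdd_below Zm" unfolding Zm_def by (rule bdd_belowI[of _ 0]) auto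
  define sg where "sg = Inf Zm"
  have sgZ: "sg \<in> Zm" unfolding sg_def by (rule closed_contains_Inf[OF Zne Zbd Zcl])
  then have sg: "0 \<le> sg" "sg \<le> t0" "R sg = m" unfolding Zm_def by auto
  have Rge: "m \<le> R u" if u: "0 \<le> u" "u \<le> sg" for u
  proof (rule ccontr)
    assume "\<not> m \<le> R u"
    then have "R u < m" by simp
    then have "u \<noteq> sg" using sg by auto
    have "\<exists>x. 0 \<le> x \<and> x \<le> u \<and> R x = m"
      by (rule IVT2') (use \<open>R u < m\<close> m R0 cR u in auto)
    then obtain x where x: "0 \<le> x" "x \<le> u" "R x = m" by blast
    then have "x \<in> Zm" using u sg unfolding Zm_def by auto
    then have "sg \<le> x" unfolding sg_def by (rule cInf_lower[OF _ Zbd])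
    then show False using x u \<open>u \<noteq> sg\<close> by auto
  qed
  have ident: "R u = b + mu * u + vol * W u - L u" if u: "0 \<le> u" "u \<le> sg" for u
  proof -
    have "(\<lambda>u. R u - (b + mu * u + vol * W u - L u)) u \<in> {0}"
    proof (rule rat_dense_closed[where c = sg and S = "{0}" and f = "\<lambda>u. R u - (b + mu * u + vol * W u - L u)"])
      have cW: "continuous_on {0..sg} W" by (rule continuous_on_subset[OF contW]) auto
      have cL: "continuous_on {0..sg} L" by (rule continuous_on_subset[OF contL]) auto
      show "continuous_on {0..sg} (\<lambda>u. R u - (b + mu * u + vol * W u - L u))"
        using cR[of 0 sg] cW cL by (intro continuous_intros) auto
      show "closed {0::real}" by simp
      fix q :: real assume q: "q \<in> \<rat>" "0 \<le> q" "q \<le> sg"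
      have "\<forall>u\<in>{0..q}. m \<le> R u" using Rge q by auto
      then have "R q = b + mu * q + vol * W q - L q" using P q by blast
      then show "(\<lambda>u. R u - (b + mu * u + vol * W u - L u)) q \<in> {0}" by simp
    qed (use u in auto)
    then show ?thesis by simp
  qed
  define Zb where "Zb = {0..sg} \<inter> R -` {b}"
  have Zbne: "Zb \<noteq> {}" unfolding Zb_def using R0 sg by auto
  have Zbcl: "closed Zb" unfolding Zb_def
    by (rule continuous_closed_preimage[OF cR]) auto
  have Zbbd: "bdd_above Zb" unfolding Zb_def by (rule bdd_aboveI[of _ sg]) auto
  define s where "s = Sup Zb"
  have sZ: "s \<in> Zb" unfolding s_def by (rule closed_contains_Sup[OF Zbne Zbbd Zbcl])
  then have s: "0 \<le> s" "s \<le> sg" "R s = b" unfolding Zb_def by auto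
  have ssg: "s < sg" using s sg m by (cases "s = sg") auto
  have Rlt: "R u < b" if "s < u" "u \<le> sg" for u
  proof -
    have "R u \<le> b" using bnd that s by auto
    moreover have "R u \<noteq> b"
    proof
      assume "R u = b"
      then have "u \<in> Zb" unfolding Zb_def using that s by auto
      then have "u \<le> s" unfolding s_def by (rule cSup_upper[OF _ Zbbd])
      then show False using that by auto
    qed
    ultimately show ?thesis by auto
  qed
  have rc: "continuous (at_right a) L" for a
  proof -
    have "isCont L a" using contL by (simp add: continuous_on_eq_continuous_at)
    then show ?thesis using continuous_at_split by blast
  qed
  have mL: "L x \<le> L y" if "x \<le> y" for x y using monoL that by (auto simp: mono_def)
  have "ennreal (L sg - L s) = emeasure (interval_measure L) {s<..sg}"
    using emeasure_interval_measure_Ioc[of s sg L, OF _ mL rc] ssg by simp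
  also have "\<dots> = (\<integral>\<^sup>+ t. indicator {s<..sg} t \<partial>interval_measure L)" by simp
  also have "\<dots> \<le> (\<integral>\<^sup>+ t. indicator {t. 0 \<le> t \<and> R t < b} t \<partial>interval_measure L)"
  proof (rule nn_integral_mono)
    fix t
    show "indicator {s<..sg} t \<le> (indicator {t. 0 \<le> t \<and> R t < b} t :: ennreal)"
      using Rlt s by (auto simp: indicator_def)
  qed
  also have "\<dots> = 0" by (rule supp)
  finally have "ennreal (L sg - L s) \<le> 0" .
  then have "L sg - L s \<le> 0" using ennreal_eq_0_iff[of "L sg - L s"] by simp
  moreover have "L s \<le> L sg" using mL ssg by auto
  ultimately have Leq: "L sg = L s" by auto
  have e1: "R sg = b + mu * sg + vol * W sg - L sg" using ident sg by auto
  have e2: "R s = b + mu * s + vol * W s - L s" using ident s by auto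
  have "vol * (W s - W sg) = b - m + mu * (sg - s)" using e1 e2 Leq sg s by (simp add: algebra_simps)
  moreover have "mu * (sg - s) \<ge> 0" using mu ssg by auto
  ultimately have "vol * (W s - W sg) \<ge> b - m" by linarith
  then have "W s - W sg \<ge> (b - m)/vol" using vol by (simp add: field_simps)
  then have "\<bar>W s\<bar> + \<bar>W sg\<bar> \<ge> (b - m)/vol" by linarith
  then have "\<bar>W s\<bar> \<ge> (b-m)/(2 * vol) \<or> \<bar>W sg\<bar> \<ge> (b-m)/(2 * vol)" by (auto simp: field_simps)
  then show ?thesis using s sg by auto
qed



lemma hit0_ge_iff: "ereal a \<le> hit0 R \<omega> \<longleftrightarrow> (\<forall>t. 0 \<le> t \<and> t < a \<longrightarrow> R t \<omega> \<noteq> 0)"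
  unfolding hit0_def le_Inf_iff by (auto simp: not_less[symmetric])

lemma pos_char:
  fixes f :: "real \<Rightarrow> real"
  assumes cont: "continuous_on {0..} f" and nn: "\<forall>t\<ge>0. 0 \<le> f t"
  shows "(\<forall>t. 0 \<le> t \<and> t < a \<longrightarrow> f t \<noteq> 0) \<longleftrightarrow>
         (\<forall>c\<in>\<rat> \<inter> {c. 0 \<le> c \<and> c < a}. \<exists>i::nat. \<forall>q\<in>\<rat> \<inter> {0..c}. 1 / real (Suc i) \<le> f q)"
proof
  assume H: "\<forall>t. 0 \<le> t \<and> t < a \<longrightarrow> f t \<noteq> 0"
  show "\<forall>c\<in>\<rat> \<inter> {c. 0 \<le> c \<and> c < a}. \<exists>i::nat. \<forall>q\<in>\<rat> \<inter> {0..c}. 1 / real (Suc i) \<le> f q"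
  proof (intro ballI)
    fix c assume c0: "c \<in> \<rat> \<inter> {c. 0 \<le> c \<and> c < a}"
    then have c: "c \<in> \<rat>" "0 \<le> c \<and> c < a" by auto
    have "continuous_on {0..c} f" by (rule continuous_on_subset[OF cont]) auto
    from continuous_attains_inf[OF compact_Icc _ this] c obtain x where
      x: "x \<in> {0..c}" "\<forall>y\<in>{0..c}. f x \<le> f y" by auto
    have "f x > 0" using H nn x c by force
    then obtain n where n: "n > 0" "inverse (real n) < f x" using ex_inverse_of_nat_less by blast
    show "\<exists>i::nat. \<forall>q\<in>\<rat> \<inter> {0..c}. 1 / real (Suc i) \<le> f q"
    proof (intro exI[of _ "n - 1"] ballI)
      fix q assume "q \<in> \<rat> \<inter> {0..c}"
      then have "f x \<le> f q" using x by auto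
      then have "inverse (real n) < f q" using n(2) by linarith
      moreover have "real (Suc (n - 1)) = real n" using n by auto
      ultimately show "1 / real (Suc (n - 1)) \<le> f q" by (simp add: inverse_eq_divide)
    qed
  qed
next
  assume H: "\<forall>c\<in>\<rat> \<inter> {c. 0 \<le> c \<and> c < a}. \<exists>i::nat. \<forall>q\<in>\<rat> \<inter> {0..c}. 1 / real (Suc i) \<le> f q"
  show "\<forall>t. 0 \<le> t \<and> t < a \<longrightarrow> f t \<noteq> 0"
  proof (intro allI impI)
    fix t assume t: "0 \<le> t \<and> t < a"
    from Rats_dense_in_real[of t a] t obtain c where c: "c \<in> \<rat>" "t < c" "c < a" by auto
    with H t obtain i :: nat where i: "\<forall>q\<in>\<rat> \<inter> {0..c}. 1 / real (Suc i) \<le> f q" by force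
    have "f t \<in> {1 / real (Suc i)..}"
    proof (rule rat_dense_closed[where c = c and f = f and S = "{1 / real (Suc i)..}"])
      show "continuous_on {0..c} f" by (rule continuous_on_subset[OF cont]) auto
    qed (use i t c in auto)
    moreover have "1 / real (Suc i) > 0" by simp
    ultimately show "f t \<noteq> 0" by auto
  qed
qed

lemma meas_hit0_ge:
  assumes path: "\<forall>\<omega>\<in>space M. continuous_on {0..} (\<lambda>t. R t \<omega>) \<and> (\<forall>t\<ge>0. 0 \<le> R t \<omega>)"
    and meas: "\<forall>q\<ge>0. R q \<in> borel_measurable M"
  shows "{\<omega>\<in>space M. ereal a \<le> hit0 R \<omega>} \<in> sets M"
proof -
  have eq: "{\<omega>\<in>space M. ereal a \<le> hit0 R \<omega>} =
     {\<omega>\<in>space M. \<forall>c\<in>\<rat> \<inter> {c. 0 \<le> c \<and> c < a}. \<exists>i::nat. \<forall>q\<in>\<rat> \<inter> {0..c}. 1 / real (Suc i) \<le> R q \<omega>}"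
  proof (intro Collect_cong conj_cong refl)
    fix \<omega> assume "\<omega> \<in> space M"
    then have "(\<forall>t. 0 \<le> t \<and> t < a \<longrightarrow> R t \<omega> \<noteq> 0) \<longleftrightarrow>
         (\<forall>c\<in>\<rat> \<inter> {c. 0 \<le> c \<and> c < a}. \<exists>i::nat. \<forall>q\<in>\<rat> \<inter> {0..c}. 1 / real (Suc i) \<le> R q \<omega>)"
      using path by (intro pos_char) auto
    then show "ereal a \<le> hit0 R \<omega> \<longleftrightarrow> (\<forall>c\<in>\<rat> \<inter> {c. 0 \<le> c \<and> c < a}. \<exists>i::nat. \<forall>q\<in>\<rat> \<inter> {0..c}. 1 / real (Suc i) \<le> R q \<omega>)"
      unfolding hit0_ge_iff by simp
  qed
  have cQ: "countable (\<rat> \<inter> X)" for X :: "real set"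
    using countable_rat by (rule countable_subset[rotated]) auto
  have base: "{\<omega>\<in>space M. d \<le> R q \<omega>} \<in> sets M" if "q \<ge> 0" for q d
  proof -
    have "R q \<in> borel_measurable M" using meas that by auto
    then show ?thesis by measurable
  qed
  show ?thesis unfolding eq
    apply (rule sets.sets_Collect_countable_All'[OF _ cQ])
    apply (rule sets.sets_Collect_countable_Ex)
    apply (rule sets.sets_Collect_countable_All'[OF _ cQ])
    apply (rule base)
    apply auto
    done
qed



lemma step_q:
  fixes M :: "'a measure" and W R L :: "real \<Rightarrow> 'a \<Rightarrow> real" and A :: "real \<Rightarrow> real"
  assumes P: "prob_space M"
   and measW: "\<forall>q\<ge>0. W q \<in> borel_measurable M"
   and measR: "\<forall>q\<ge>0. R q \<in> borel_measurable M"
   and measA: "\<forall>q\<ge>0. (\<lambda>\<omega>. A (R q \<omega>)) \<in> borel_measurable M"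
   and path: "\<forall>\<omega>\<in>space M. continuous_on {0..} (\<lambda>t. R t \<omega>) \<and> (\<forall>t\<ge>0. 0 \<le> R t \<omega> \<and> R t \<omega> \<le> b) \<and> W 0 \<omega> = 0"
   and A1: "\<forall>x. m \<le> x \<and> x \<le> b \<longrightarrow> A x = 1"
   and m: "m > 0" and q: "q \<ge> 0"
   and ito: "is_ito_integral M W (\<lambda>s \<omega>. if ereal s \<le> hit0 R \<omega> then vol * A (R s \<omega>) else 0) q I"
   and eqn: "AE \<omega> in M. R q \<omega> = x + integral {0..q} (\<lambda>s. if ereal s \<le> hit0 R \<omega> then mu - (1 - A (R s \<omega>)) * lam else 0) + I \<omega> - L q \<omega>"
  shows "AE \<omega> in M. (\<forall>u\<in>{0..q}. m \<le> R u \<omega>) \<longrightarrow> R q \<omega> = x + mu * q + vol * W q \<omega> - L q \<omega>"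
proof -
  interpret prob_space M by (rule P)
  define H where "H = (\<lambda>s \<omega>. if ereal s \<le> hit0 R \<omega> then vol * A (R s \<omega>) else 0)"
  define G where "G = {\<omega>\<in>space M. \<forall>u\<in>{0..q}. m \<le> R u \<omega>}"
  have Imeas: "I \<in> borel_measurable M" and conv:
    "\<And>e. e > 0 \<Longrightarrow> (\<lambda>n. measure M {\<omega> \<in> space M. \<bar>dyadic_ito_sum W H q n \<omega> - I \<omega>\<bar> > e}) \<longlonglongrightarrow> 0"
    using ito unfolding is_ito_integral_def H_def by auto
  have hitG: "ereal q \<le> hit0 R \<omega>" if "\<omega> \<in> G" for \<omega>
    unfolding hit0_ge_iff using that m unfolding G_def by force
  have HG: "H s \<omega> = vol" if "\<omega> \<in> G" "0 \<le> s" "s \<le> q" for s \<omega>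
  proof -
    have "ereal s \<le> hit0 R \<omega>" using hitG[OF that(1)] that(3) by (meson ereal_less_eq(3) order_trans)
    moreover have "A (R s \<omega>) = 1" using A1 that path unfolding G_def by auto
    ultimately show ?thesis unfolding H_def by simp
  qed
  have sumG: "dyadic_ito_sum W H q n \<omega> = vol * W q \<omega>" if "\<omega> \<in> G" for n \<omega>
  proof -
    have "dyadic_ito_sum W H q n \<omega> =
          (\<Sum>k<2^n. vol * (W (q * real (Suc k) / 2^n) \<omega> - W (q * real k / 2^n) \<omega>))"
      unfolding dyadic_ito_sum_def
    proof (rule sum.cong[OF refl])
      fix k assume "k \<in> {..<(2::nat)^n}"
      then have "real k \<le> 2^n" by (simp add: less_imp_le)
      then have "q * real k \<le> q * 2^n" using q by (intro mult_left_mono) auto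
      then have "q * real k / 2^n \<le> q" by (simp add: field_simps)
      then show "H (q * real k / 2 ^ n) \<omega> * (W (q * real (Suc k) / 2 ^ n) \<omega> - W (q * real k / 2 ^ n) \<omega>) =
          vol * (W (q * real (Suc k) / 2 ^ n) \<omega> - W (q * real k / 2 ^ n) \<omega>)"
        using HG[OF that] q by simp
    qed
    also have "\<dots> = vol * (\<Sum>k<2^n. W (q * real (Suc k) / 2^n) \<omega> - W (q * real k / 2^n) \<omega>)"
      by (simp add: sum_distrib_left)
    also have "(\<Sum>k<2^n. W (q * real (Suc k) / 2^n) \<omega> - W (q * real k / 2^n) \<omega>) = W q \<omega> - W 0 \<omega>"
      by (subst sum_lessThan_telescope[where f = "\<lambda>k. W (q * real k / 2^n) \<omega>"]) simp
    also have "W 0 \<omega> = 0" using that path unfolding G_def by auto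
    finally show ?thesis by simp
  qed
  have Gsets: "G \<in> sets M"
  proof -
    have "G = {\<omega>\<in>space M. \<forall>r\<in>\<rat> \<inter> {0..q}. m \<le> R r \<omega>}"
      unfolding G_def
    proof (intro Collect_cong conj_cong refl iffI ballI)
      fix \<omega> u assume \<omega>: "\<omega> \<in> space M" and h: "\<forall>r\<in>\<rat> \<inter> {0..q}. m \<le> R r \<omega>" and u: "u \<in> {0..q}"
      have "R u \<omega> \<in> {m..}"
      proof (rule rat_dense_closed[where c = q and S = "{m..}" and f = "\<lambda>t. R t \<omega>"])
        show "continuous_on {0..q} (\<lambda>t. R t \<omega>)"
          by (rule continuous_on_subset[of "{0..}"]) (use path \<omega> in auto)
      qed (use h u in auto)
      then show "m \<le> R u \<omega>" by simp
    qed auto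
    also have "\<dots> \<in> sets M"
    proof (rule sets.sets_Collect_countable_All')
      show "countable (\<rat> \<inter> {0..q})" using countable_rat by (rule countable_subset[rotated]) auto
      fix r assume "r \<in> \<rat> \<inter> {0..q}"
      then have "R r \<in> borel_measurable M" using measR by auto
      then show "{\<omega> \<in> space M. m \<le> R r \<omega>} \<in> sets M" by measurable
    qed
    finally show ?thesis .
  qed
  have Hmeas: "H t \<in> borel_measurable M" if "t \<ge> 0" for t
    unfolding H_def
  proof (rule measurable_If)
    show "(\<lambda>\<omega>. vol * A (R t \<omega>)) \<in> borel_measurable M"
      using measA that by (intro borel_measurable_times borel_measurable_const) auto
    show "(\<lambda>\<omega>. 0::real) \<in> borel_measurable M" by simp
    show "{\<omega> \<in> space M. ereal t \<le> hit0 R \<omega>} \<in> sets M"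
      by (rule meas_hit0_ge) (use path measR in auto)
  qed
  have Smeas: "(\<lambda>\<omega>. dyadic_ito_sum W H q n \<omega>) \<in> borel_measurable M" for n
    unfolding dyadic_ito_sum_def
    by (intro borel_measurable_sum borel_measurable_times borel_measurable_diff Hmeas
        measW[rule_format]) (use q in auto)
  have null: "{\<omega>\<in>space M. \<omega> \<in> G \<and> e < \<bar>vol * W q \<omega> - I \<omega>\<bar>} \<in> null_sets M" if e: "e > 0" for e
  proof -
    define D where "D = {\<omega>\<in>space M. \<omega> \<in> G \<and> e < \<bar>vol * W q \<omega> - I \<omega>\<bar>}"
    have Wm: "W q \<in> borel_measurable M" using measW q by auto
    have Dsets: "D \<in> sets M"
    proof -
      have "D = G \<inter> {\<omega>\<in>space M. e < \<bar>vol * W q \<omega> - I \<omega>\<bar>}" unfolding D_def using Gsets sets.sets_into_space by auto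
      also have "\<dots> \<in> sets M" using Gsets Wm Imeas by measurable
      finally show ?thesis .
    qed
    have "measure M D \<le> 0"
    proof (rule LIMSEQ_le_const[OF conv[OF e]], intro exI allI impI)
      fix n :: nat
      have "D \<subseteq> {\<omega> \<in> space M. \<bar>dyadic_ito_sum W H q n \<omega> - I \<omega>\<bar> > e}"
        unfolding D_def using sumG by auto
      moreover have "{\<omega> \<in> space M. \<bar>dyadic_ito_sum W H q n \<omega> - I \<omega>\<bar> > e} \<in> sets M"
        using Smeas[of n] Imeas by measurable
      ultimately show "measure M D \<le> measure M {\<omega> \<in> space M. \<bar>dyadic_ito_sum W H q n \<omega> - I \<omega>\<bar> > e}"
        by (rule finite_measure_mono)
    qed
    then have "measure M D = 0" using measure_nonneg[of M D] by linarith
    then have "emeasure M D = 0" by (simp add: emeasure_eq_measure)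
    then show ?thesis using Dsets unfolding D_def by (simp add: null_sets_def)
  qed
  have AEI: "AE \<omega> in M. \<omega> \<in> G \<longrightarrow> I \<omega> = vol * W q \<omega>"
  proof (rule AE_I')
    show "(\<Union>j::nat. {\<omega>\<in>space M. \<omega> \<in> G \<and> 1 / real (Suc j) < \<bar>vol * W q \<omega> - I \<omega>\<bar>}) \<in> null_sets M"
      by (intro null_sets_UN null) simp
    show "{\<omega> \<in> space M. \<not> (\<omega> \<in> G \<longrightarrow> I \<omega> = vol * W q \<omega>)} \<subseteq>
          (\<Union>j::nat. {\<omega>\<in>space M. \<omega> \<in> G \<and> 1 / real (Suc j) < \<bar>vol * W q \<omega> - I \<omega>\<bar>})"
    proof (rule subsetI)
      fix \<omega> assume "\<omega> \<in> {\<omega> \<in> space M. \<not> (\<omega> \<in> G \<longrightarrow> I \<omega> = vol * W q \<omega>)}"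
      then have \<omega>: "\<omega> \<in> space M" "\<omega> \<in> G" "I \<omega> \<noteq> vol * W q \<omega>" by auto
      then have "\<bar>vol * W q \<omega> - I \<omega>\<bar> > 0" by auto
      then obtain n where n: "n > 0" "inverse (real n) < \<bar>vol * W q \<omega> - I \<omega>\<bar>"
        using ex_inverse_of_nat_less by blast
      then have "1 / real (Suc (n - 1)) < \<bar>vol * W q \<omega> - I \<omega>\<bar>" by (simp add: inverse_eq_divide)
      then show "\<omega> \<in> (\<Union>j::nat. {\<omega>\<in>space M. \<omega> \<in> G \<and> 1 / real (Suc j) < \<bar>vol * W q \<omega> - I \<omega>\<bar>})"
        using \<omega> by (intro UN_I[of "n - 1"]) auto
    qed
  qed
  show ?thesis
    using AEI eqn AE_space
  proof eventually_elim
    case (elim \<omega>)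
    show ?case
    proof
      assume h: "\<forall>u\<in>{0..q}. m \<le> R u \<omega>"
      then have \<omega>G: "\<omega> \<in> G" unfolding G_def using elim by auto
      have "integral {0..q} (\<lambda>s. if ereal s \<le> hit0 R \<omega> then mu - (1 - A (R s \<omega>)) * lam else 0)
            = integral {0..q} (\<lambda>s. mu)"
      proof (rule integral_cong)
        fix s assume s: "s \<in> {0..q}"
        have "ereal s \<le> hit0 R \<omega>" using hitG[OF \<omega>G] s by (meson atLeastAtMost_iff ereal_less_eq(3) order_trans)
        moreover have "A (R s \<omega>) = 1" using A1 h s path elim by auto
        ultimately show "(if ereal s \<le> hit0 R \<omega> then mu - (1 - A (R s \<omega>)) * lam else 0) = mu" by simp
      qed
      also have "\<dots> = q * mu" using q by simp
      finally show "R q \<omega> = x + mu * q + vol * W q \<omega> - L q \<omega>"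
        using elim \<omega>G by (simp add: mult.commute)
    qed
  qed
qed



lemma main_b:
  fixes M :: "'a measure" and W R L :: "real \<Rightarrow> 'a \<Rightarrow> real" and A :: "real \<Rightarrow> real"
  assumes P: "prob_space M" and U: "usual_conditions M F" and BM: "brownian_motion M F W"
    and sig: "sig > 0" and mu: "mu > 0" and m: "0 < m" "m < b"
    and A1: "\<forall>x. m \<le> x \<and> x \<le> b \<longrightarrow> A x = 1"
    and measA: "\<forall>q\<ge>0. (\<lambda>\<omega>. A (R q \<omega>)) \<in> borel_measurable M"
    and RL: "reflected_solution M F W sig mu lam A b b R L"
  shows "AE \<omega> in M. hit0 R \<omega> \<le> ereal T \<longrightarrow> (\<exists>t\<in>{0..T+1}. (b-m)/(2 * sig) \<le> \<bar>W t \<omega>\<bar>)"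
proof -
  have adR: "adapted F R" using RL unfolding reflected_solution_def by (elim conjE) assumption
  have pth: "\<forall>\<omega>\<in>space M.
        R 0 \<omega> = b \<and>
        continuous_on {0..} (\<lambda>t. R t \<omega>) \<and>
        continuous_on UNIV (\<lambda>t. L t \<omega>) \<and>
        mono (\<lambda>t. L t \<omega>) \<and>
        (\<forall>t\<le>0. L t \<omega> = 0) \<and>
        (\<forall>t\<ge>0. 0 \<le> R t \<omega> \<and> R t \<omega> \<le> b) \<and>
        (\<forall>s t. hit0 R \<omega> \<le> ereal s \<longrightarrow> s \<le> t \<longrightarrow> R t \<omega> = R s \<omega> \<and> L t \<omega> = L s \<omega>) \<and>
        (\<integral>\<^sup>+ t. indicator {t. 0 \<le> t \<and> R t \<omega> < b} t \<partial>interval_measure (\<lambda>t. L t \<omega>)) = 0"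
    using RL unfolding reflected_solution_def by (elim conjE) assumption
  have itoall: "\<forall>t\<ge>0. \<exists>I. is_ito_integral M W
                    (\<lambda>s \<omega>. if ereal s \<le> hit0 R \<omega> then sig * A (R s \<omega>) else 0) t I \<and>
        (AE \<omega> in M. R t \<omega> = b
            + integral {0..t} (\<lambda>s. if ereal s \<le> hit0 R \<omega> then mu - (1 - A (R s \<omega>)) * lam else 0)
            + I \<omega> - L t \<omega>)"
    using RL unfolding reflected_solution_def by (elim conjE) assumption
  have adW: "adapted F W" using BM unfolding brownian_motion_def by (elim conjE) assumption
  have pW: "\<forall>\<omega>\<in>space M. W 0 \<omega> = 0 \<and> continuous_on {0..} (\<lambda>t. W t \<omega>)"
    using BM unfolding brownian_motion_def by (elim conjE) assumption
  have measW: "\<forall>q\<ge>0. W q \<in> borel_measurable M" using adapted_meas[OF U adW] by auto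
  have measR: "\<forall>q\<ge>0. R q \<in> borel_measurable M" using adapted_meas[OF U adR] by auto
  have AEq: "\<forall>q\<in>\<rat> \<inter> {0..}. AE \<omega> in M. (\<forall>u\<in>{0..q}. m \<le> R u \<omega>) \<longrightarrow> R q \<omega> = b + mu * q + sig * W q \<omega> - L q \<omega>"
  proof
    fix q :: real assume "q \<in> \<rat> \<inter> {0..}"
    then have q: "q \<ge> 0" by auto
    from itoall q obtain I where I: "is_ito_integral M W
                    (\<lambda>s \<omega>. if ereal s \<le> hit0 R \<omega> then sig * A (R s \<omega>) else 0) q I"
       "AE \<omega> in M. R q \<omega> = b
            + integral {0..q} (\<lambda>s. if ereal s \<le> hit0 R \<omega> then mu - (1 - A (R s \<omega>)) * lam else 0)
            + I \<omega> - L q \<omega>" by blast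
    show "AE \<omega> in M. (\<forall>u\<in>{0..q}. m \<le> R u \<omega>) \<longrightarrow> R q \<omega> = b + mu * q + sig * W q \<omega> - L q \<omega>"
      proof (rule step_q[where M=M and W=W and R=R and A=A and L=L and b=b and m=m and q=q and I=I
          and vol=sig and mu=mu and lam=lam and x=b, OF P measW measR measA _ A1 m(1) q I(1) I(2)])
        show "\<forall>\<omega>\<in>space M. continuous_on {0..} (\<lambda>t. R t \<omega>) \<and> (\<forall>t\<ge>0. 0 \<le> R t \<omega> \<and> R t \<omega> \<le> b) \<and> W 0 \<omega> = 0"
          using pth pW by blast
      qed
  qed
  have cQ: "countable (\<rat> \<inter> {0::real..})" using countable_rat by (rule countable_subset[rotated]) auto
  have AEall: "AE \<omega> in M. \<forall>q\<in>\<rat> \<inter> {0..}. (\<forall>u\<in>{0..q}. m \<le> R u \<omega>) \<longrightarrow> R q \<omega> = b + mu * q + sig * W q \<omega> - L q \<omega>"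
    by (rule AE_ball_countable[OF cQ, THEN iffD2, OF AEq])
  show ?thesis
    using AEall AE_space
  proof eventually_elim
    case (elim \<omega>)
    show ?case
    proof
      assume "hit0 R \<omega> \<le> ereal T"
      then have "Inf {ereal t | t. 0 \<le> t \<and> R t \<omega> = 0} < ereal (T + 1)"
        unfolding hit0_def by (simp add: le_less_trans)
      then obtain t0 where t0: "0 \<le> t0" "R t0 \<omega> = 0" "t0 < T + 1"
        unfolding Inf_less_iff by auto
      have "\<exists>t\<in>{0..t0}. (b-m)/(2 * sig) \<le> \<bar>W t \<omega>\<bar>"
      proof (rule path_lemma[where R = "\<lambda>t. R t \<omega>" and L = "\<lambda>t. L t \<omega>" and mu = mu and m = m])
        show "\<forall>q\<in>\<rat>. 0 \<le> q \<longrightarrow> (\<forall>u\<in>{0..q}. m \<le> R u \<omega>) \<longrightarrow> R q \<omega> = b + mu * q + sig * W q \<omega> - L q \<omega>"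
          using elim(1) by auto
      qed (use pth pW elim(2) sig mu m t0 in auto)
      then show "\<exists>t\<in>{0..T+1}. (b-m)/(2 * sig) \<le> \<bar>W t \<omega>\<bar>" using t0 by force
    qed
  qed
qed



lemma measA_lemma:
  assumes "X \<in> borel_measurable M" "\<forall>\<omega>\<in>space M. 0 \<le> X \<omega> \<and> X \<omega> \<le> b"
    "\<phi> \<in> borel_measurable borel" "\<forall>x\<in>{0..b}. A x = \<phi> x"
  shows "(\<lambda>\<omega>. A (X \<omega>)) \<in> borel_measurable M"
proof -
  have "(\<lambda>\<omega>. \<phi> (X \<omega>)) \<in> borel_measurable M" using assms(1,3) by measurable
  moreover have "\<And>\<omega>. \<omega> \<in> space M \<Longrightarrow> A (X \<omega>) = \<phi> (X \<omega>)" using assms(2,4) by auto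
  ultimately show ?thesis using measurable_cong by metis
qed

lemma phi_meas2:
  fixes G1 G2 :: "real \<Rightarrow> real"
  assumes b: "b > 0" and c1: "continuous_on {0..} G1" and c2: "continuous_on ({0..} - {b}) G2"
  shows "(\<lambda>x. if x < m2 then - lam * G1 (max 0 x) / (sig^2 * G2 (max 0 x)) else 1) \<in> borel_measurable borel"
proof -
  have f1: "(\<lambda>x. G1 (max 0 x)) \<in> borel_measurable borel"
    by (rule borel_measurable_continuous_onI, rule continuous_on_compose2[OF c1])
       (auto intro!: continuous_intros)
  have "continuous_on (- {b}) (\<lambda>x. G2 (max 0 x))"
    by (rule continuous_on_compose2[OF c2]) (use b in \<open>auto intro!: continuous_intros\<close>)
  then have f2: "(\<lambda>x. G2 (max 0 x)) \<in> borel_measurable borel"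
    by (intro borel_measurable_continuous_countable_exceptions[of "{b}"]) auto
  show ?thesis using f1 f2 by measurable
qed



theorem theorem4p2:
  fixes M :: "'a measure" and F :: "real \<Rightarrow> 'a measure" and W :: "real \<Rightarrow> 'a \<Rightarrow> real"
    and sig c mu lam T b0 :: real
    and g g' g'' A :: "real \<Rightarrow> real \<Rightarrow> real"
    and R L :: "real \<Rightarrow> real \<Rightarrow> 'a \<Rightarrow> real"
  assumes "prob_space M" and "usual_conditions M F" and "brownian_motion M F W"
    and "sig > 0" and "c > 0" and "0 < mu" and "mu < lam" and "T > 0" and "b0 > 0"
    and hjb: "\<forall>b\<ge>b0. hjb_solution sig mu lam c b (g b) (g' b) (g'' b)"
    and f_C2: "\<forall>x\<ge>0. (g' b0 has_real_derivative g'' b0 x) (at x within {0..})"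
    and f_C2': "continuous_on {0..} (g'' b0)"
    and f_lin: "\<forall>x\<ge>b0. g'' b0 x = 0"
    and A_max: "\<forall>b\<ge>b0. \<forall>x\<in>{0..b}. A b x \<in> {0..1} \<and>
                  (x < b \<longrightarrow> (\<forall>a\<in>{0..1}. hjb_bracket sig mu lam c a (g b x) (g' b x) (g'' b x)
                                  \<le> hjb_bracket sig mu lam c (A b x) (g b x) (g' b x) (g'' b x)))"
    and A_case1: "lam \<ge> 2 * mu \<longrightarrow> (\<forall>b\<ge>b0. \<forall>x\<in>{0..b}. A b x = 1)"
    and A_case2: "lam < 2 * mu \<longrightarrow> (\<exists>m>0. \<forall>b\<ge>b0. \<forall>x\<in>{0..b}.
                    (x < m \<longrightarrow> A b x = - lam * g' b x / (sig^2 * g'' b x) \<and> 0 < A b x \<and> A b x < 1) \<and>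
                    (m \<le> x \<longrightarrow> A b x = 1))"
    and RL: "\<forall>b\<ge>b0. reflected_solution M F W sig mu lam (A b) b b (R b) (L b)"
  shows "((\<lambda>b. measure M {\<omega> \<in> space M. hit0 (R b) \<omega> \<le> ereal T}) \<longlongrightarrow> 0) at_top"
proof -
  interpret prob_space M by fact
  note U = \<open>usual_conditions M F\<close> and BM = \<open>brownian_motion M F W\<close>
  have sig: "sig > 0" and mu: "mu > 0" and T: "T > 0" and b0: "b0 > 0" by fact+
  obtain m where m: "m > 0" and Am: "\<forall>b\<ge>b0. \<forall>x\<in>{0..b}. m \<le> x \<longrightarrow> A b x = 1"
  proof (cases "lam \<ge> 2 * mu")
    case True
    then show ?thesis using A_case1 that[of 1] by auto
  next
    case False
    then obtain m where "m > 0" "\<forall>b\<ge>b0. \<forall>x\<in>{0..b}.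
                    (x < m \<longrightarrow> A b x = - lam * g' b x / (sig^2 * g'' b x) \<and> 0 < A b x \<and> A b x < 1) \<and>
                    (m \<le> x \<longrightarrow> A b x = 1)" using A_case2 by auto
    then show ?thesis using that[of m] by auto
  qed
  have adW: "adapted F W" using BM unfolding brownian_motion_def by (elim conjE) assumption
  have pW: "\<forall>\<omega>\<in>space M. W 0 \<omega> = 0 \<and> continuous_on {0..} (\<lambda>t. W t \<omega>)"
    using BM unfolding brownian_motion_def by (elim conjE) assumption
  have measW: "\<forall>q\<ge>0. W q \<in> borel_measurable M" using adapted_meas[OF U adW] by auto
  have measA: "\<forall>q\<ge>0. (\<lambda>\<omega>. A b (R b q \<omega>)) \<in> borel_measurable M" if b: "b \<ge> b0" for b
  proof (intro allI impI)
    fix q :: real assume q: "q \<ge> 0"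
    have RLb: "reflected_solution M F W sig mu lam (A b) b b (R b) (L b)" using RL b by auto
    have adR: "adapted F (R b)" using RLb unfolding reflected_solution_def by (elim conjE) assumption
    have Rm: "R b q \<in> borel_measurable M" using adapted_meas[OF U adR q] .
    have bnds: "\<forall>\<omega>\<in>space M. \<forall>t\<ge>0. 0 \<le> R b t \<omega> \<and> R b t \<omega> \<le> b"
      using RLb unfolding reflected_solution_def by blast
    then have bq: "\<forall>\<omega>\<in>space M. 0 \<le> R b q \<omega> \<and> R b q \<omega> \<le> b" using q by auto
    show "(\<lambda>\<omega>. A b (R b q \<omega>)) \<in> borel_measurable M"
    proof (cases "lam \<ge> 2 * mu")
      case True
      show ?thesis by (rule measA_lemma[OF Rm bq, where \<phi>="\<lambda>_. 1"]) (use True A_case1 b in auto)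
    next
      case False
      then obtain m2 where m2: "m2 > 0" "\<forall>b\<ge>b0. \<forall>x\<in>{0..b}.
                    (x < m2 \<longrightarrow> A b x = - lam * g' b x / (sig^2 * g'' b x) \<and> 0 < A b x \<and> A b x < 1) \<and>
                    (m2 \<le> x \<longrightarrow> A b x = 1)" using A_case2 by auto
      have hj: "hjb_solution sig mu lam c b (g b) (g' b) (g'' b)" using hjb b by auto
      have c1: "continuous_on {0..} (g' b)" using hj unfolding hjb_solution_def by (elim conjE) assumption
      have c2: "continuous_on ({0..} - {b}) (g'' b)" using hj unfolding hjb_solution_def by (elim conjE) assumption
      have "\<forall>x\<in>{0..b}. A b x = (\<lambda>x. if x < m2 then - lam * g' b (max 0 x) / (sig^2 * g'' b (max 0 x)) else 1) x"
        using m2(2) b by auto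
      then show ?thesis
        by (intro measA_lemma[OF Rm bq, where \<phi>="\<lambda>x. if x < m2 then - lam * g' b (max 0 x) / (sig^2 * g'' b (max 0 x)) else 1"]
           phi_meas2[OF _ c1 c2]) (use b b0 in auto)
    qed
  qed
  define E where "E = (\<lambda>k. {\<omega>\<in>space M. \<exists>t\<in>{0..T+1}. k < \<bar>W t \<omega>\<bar>})"
  have Esets: "E k \<in> sets M" for k
  proof -
    have "E k = {\<omega>\<in>space M. \<exists>r\<in>\<rat> \<inter> {0..T+1}. k < \<bar>W r \<omega>\<bar>}"
      unfolding E_def
    proof (intro Collect_cong conj_cong refl iffI)
      fix \<omega> assume \<omega>: "\<omega> \<in> space M" and "\<exists>t\<in>{0..T+1}. k < \<bar>W t \<omega>\<bar>"
      then obtain t where t: "t \<in> {0..T+1}" "k < \<bar>W t \<omega>\<bar>" by auto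
      show "\<exists>r\<in>\<rat> \<inter> {0..T+1}. k < \<bar>W r \<omega>\<bar>"
      proof (rule ccontr)
        assume nr: "\<not> (\<exists>r\<in>\<rat> \<inter> {0..T+1}. k < \<bar>W r \<omega>\<bar>)"
        have Q: "W q \<omega> \<in> {y. \<bar>y\<bar> \<le> k}" if "q \<in> \<rat>" "0 \<le> q" "q \<le> T + 1" for q
        proof -
          have "q \<in> \<rat> \<inter> {0..T+1}" using that by simp
          then have "\<not> k < \<bar>W q \<omega>\<bar>" using nr by blast
          then show ?thesis by simp
        qed
        have "W t \<omega> \<in> {y. \<bar>y\<bar> \<le> k}"
        proof (rule rat_dense_closed[where c = "T+1" and f = "\<lambda>t. W t \<omega>" and S = "{y. \<bar>y\<bar> \<le> k}"])
          show "continuous_on {0..T + 1} (\<lambda>t. W t \<omega>)"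
            by (rule continuous_on_subset[of "{0..}"]) (use pW \<omega> in auto)
          show "closed {y::real. \<bar>y\<bar> \<le> k}" by (intro closed_Collect_le continuous_intros)
          show "\<And>q. q \<in> \<rat> \<Longrightarrow> 0 \<le> q \<Longrightarrow> q \<le> T + 1 \<Longrightarrow> W q \<omega> \<in> {y. \<bar>y\<bar> \<le> k}" by (rule Q)
        qed (use t in simp_all)
        then show False using t by simp
      qed
    qed auto
    also have "\<dots> \<in> sets M"
    proof (rule sets.sets_Collect_countable_Ex')
      show "countable (\<rat> \<inter> {0..T+1})" using countable_rat by (rule countable_subset[rotated]) auto
      fix r assume "r \<in> \<rat> \<inter> {0..T+1}"
      then have "W r \<in> borel_measurable M" using measW by auto
      then show "{\<omega> \<in> space M. k < \<bar>W r \<omega>\<bar>} \<in> sets M" by measurable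
    qed
    finally show ?thesis .
  qed
  have Emono: "E k \<subseteq> E k'" if "k' \<le> k" for k k' unfolding E_def using that by force
  have Eempty: "(\<Inter>n. E (real n)) = {}"
  proof (rule ccontr)
    assume "(\<Inter>n. E (real n)) \<noteq> {}"
    then obtain \<omega> where \<omega>: "\<And>n. \<omega> \<in> E (real n)" by auto
    then have \<omega>s: "\<omega> \<in> space M" unfolding E_def by auto
    have "compact ((\<lambda>t. W t \<omega>) ` {0..T+1})"
      by (rule compact_continuous_image[OF _ compact_Icc], rule continuous_on_subset[of "{0..}"])
         (use pW \<omega>s in auto)
    then have "bounded ((\<lambda>t. W t \<omega>) ` {0..T+1})" by (rule compact_imp_bounded)
    then obtain B where B: "\<forall>t\<in>{0..T+1}. \<bar>W t \<omega>\<bar> \<le> B" unfolding bounded_iff by auto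
    obtain n :: nat where "B \<le> real n" using real_arch_simple by blast
    with \<omega>[of n] B show False unfolding E_def by force
  qed
  have limn: "(\<lambda>n. measure M (E (real n))) \<longlonglongrightarrow> 0"
  proof -
    have "(\<lambda>n. measure M (E (real n))) \<longlonglongrightarrow> measure M (\<Inter>n. E (real n))"
      by (rule finite_Lim_measure_decseq) (auto simp: Esets decseq_def intro!: Emono)
    then show ?thesis using Eempty by simp
  qed
  have limk: "((\<lambda>k. measure M (E k)) \<longlongrightarrow> 0) at_top"
  proof (rule order_tendstoI)
    fix a :: real assume a: "a < 0"
    have "\<forall>k. a < measure M (E k)" using a measure_nonneg[of M] by (metis less_le_trans)
    then show "eventually (\<lambda>k. a < measure M (E k)) at_top" by (simp add: always_eventually)
  next
    fix a :: real assume "0 < a"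
    from order_tendstoD(2)[OF limn this] obtain N where N: "\<And>n. n \<ge> N \<Longrightarrow> measure M (E (real n)) < a"
      unfolding eventually_sequentially by auto
    show "eventually (\<lambda>k. measure M (E k) < a) at_top"
      unfolding eventually_at_top_linorder
    proof (intro exI[of _ "real N"] allI impI)
      fix k assume "real N \<le> k"
      then have "measure M (E k) \<le> measure M (E (real N))"
        by (intro finite_measure_mono Emono Esets)
      then show "measure M (E k) < a" using N[of N] by simp
    qed
  qed
  define h where "h = (\<lambda>b. (b - m) / (2 * sig) - 1)"
  have hlim: "filterlim h at_top at_top"
    unfolding filterlim_at_top eventually_at_top_linorder
  proof (intro allI exI[of _ "2 * sig * (_ + 1) + m"] allI impI)
    fix Z b :: real assume "2 * sig * (Z + 1) + m \<le> b"
    then have "2 * sig * (Z + 1) \<le> b - m" by simp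
    then have "Z + 1 \<le> (b - m) / (2 * sig)" using sig by (simp add: field_simps)
    then show "Z \<le> h b" unfolding h_def by simp
  qed
  have lim2: "((\<lambda>b. measure M (E (h b))) \<longlongrightarrow> 0) at_top"
    by (rule filterlim_compose[OF limk hlim])
  have bound: "measure M {\<omega> \<in> space M. hit0 (R b) \<omega> \<le> ereal T} \<le> measure M (E (h b))"
    if b: "b \<ge> b0" "b > m" for b
  proof (rule finite_measure_mono_AE[OF _ Esets])
    have RLb: "reflected_solution M F W sig mu lam (A b) b b (R b) (L b)" using RL b by auto
    have A1: "\<forall>x. m \<le> x \<and> x \<le> b \<longrightarrow> A b x = 1" using Am b m by auto
    have main: "AE \<omega> in M. hit0 (R b) \<omega> \<le> ereal T \<longrightarrow> (\<exists>t\<in>{0..T+1}. (b-m)/(2 * sig) \<le> \<bar>W t \<omega>\<bar>)"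
      by (rule main_b[OF \<open>prob_space M\<close> U BM sig mu m b(2) A1 measA[OF b(1)] RLb])
    show "AE \<omega> in M. \<omega> \<in> {\<omega> \<in> space M. hit0 (R b) \<omega> \<le> ereal T} \<longrightarrow> \<omega> \<in> E (h b)"
      using main
    proof eventually_elim
      case (elim \<omega>)
      show ?case
      proof
        assume "\<omega> \<in> {\<omega> \<in> space M. hit0 (R b) \<omega> \<le> ereal T}"
        then obtain t where "t \<in> {0..T+1}" "(b-m)/(2 * sig) \<le> \<bar>W t \<omega>\<bar>" "\<omega> \<in> space M" using elim by auto
        then show "\<omega> \<in> E (h b)" unfolding E_def h_def by force
      qed
    qed
  qed
  show ?thesis
  proof (rule tendsto_sandwich[OF _ _ tendsto_const lim2])
    show "eventually (\<lambda>b. 0 \<le> measure M {\<omega> \<in> space M. hit0 (R b) \<omega> \<le> ereal T}) at_top" by simp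
    show "eventually (\<lambda>b. measure M {\<omega> \<in> space M. hit0 (R b) \<omega> \<le> ereal T} \<le> measure M (E (h b))) at_top"
      unfolding eventually_at_top_linorder using bound
      by (intro exI[of _ "max b0 (m + 1)"]) auto
  qed
qed


end
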